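(* In the double-option game, let $(b,r)$ with $b,r\ge0$ be any proposal and let bidder 2 hold any belief (probability distribution) about $v_1$ on $[\underline v_1,\bar v_1]$ after observing $(b,r)$. Then bidder 2's best response can be described by a pair of critical values $(v_2^b,v_2^r)$ satisfying $$v_2^b\le \min\{b+r,\bar v_2\}\le v_2^r\le \bar v_2,$$ such that type $v_2$ accepts the bribe $b$ if $v_2\le v_2^b$, rejects the proposal if $v_2^b<v_2<v_2^r$, and accepts the request $r$ if $v_2\ge v_2^r$.
   Context: Two risk-neutral bidders $i=1,2$ compete for one indivisible object. Bidder $i$'s valuation $v_i$ is private, drawn independently from a cdf $F_i$ on $[\underline v_i,\bar v_i]$ with $0\le \underline v_i<\bar v_i<\infty$, with continuous density $0<f_i<\infty$ on that interval. Double-option game: bidder 1 learns $v_1$ and proposes $(b,r)$, $b,r\ge 0$. Bidder 2 learns $v_2$, observes $(b,r)$ and either accepts the bribe (payoffs $(v_1-b,\ b)$ to bidders 1 and 2), accepts the request (payoffs $(r,\ v_2-r)$), or rejects, in which case both bid truthfully in a second-price auction without reserve price (payoffs $((v_1-v_2)^+,\ (v_2-v_1)^+)$). A best response of bidder 2 to a belief is a choice for each type $v_2$ maximizing her expected payoff given the belief about $v_1$. *)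

theory Defs
  imports "HOL-Probability.Probability"
begin

datatype response = AcceptBribe | AcceptRequest | Reject

definition payoff2 :: "real \<Rightarrow> real \<Rightarrow> response \<Rightarrow> real \<Rightarrow> real \<Rightarrow> real" where
  "payoff2 b r a v1 v2 = (case a of
      AcceptBribe \<Rightarrow> b
    | AcceptRequest \<Rightarrow> v2 - r
    | Reject \<Rightarrow> max (v2 - v1) 0)"

definition exp_payoff2 :: "real measure \<Rightarrow> real \<Rightarrow> real \<Rightarrow> response \<Rightarrow> real \<Rightarrow> real" where
  "exp_payoff2 M b r a v2 = integral\<^sup>L M (\<lambda>v1. payoff2 b r a v1 v2)"

definition best_response_on ::
  "real measure \<Rightarrow> real \<Rightarrow> real \<Rightarrow> real set \<Rightarrow> (real \<Rightarrow> response) \<Rightarrow> bool" where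
  "best_response_on M b r S \<sigma> \<longleftrightarrow>
     (\<forall>v2\<in>S. \<forall>a. exp_payoff2 M b r a v2 \<le> exp_payoff2 M b r (\<sigma> v2) v2)"

definition threshold_strategy :: "real \<Rightarrow> real \<Rightarrow> real \<Rightarrow> response" where
  "threshold_strategy vb vr v2 =
     (if v2 \<le> vb then AcceptBribe else if v2 < vr then Reject else AcceptRequest)"

end

theory Submission
  imports Defs
begin

lemma abstract_thresholds:
  fixes phi :: "real \<Rightarrow> real" and b r lv2 uv2 :: real
  assumes p0: "phi 0 \<le> b" and lv: "0 \<le> lv2" and luv: "lv2 < uv2"
    and b0: "0 \<le> b" and r0: "0 \<le> r"
    and mono: "\<And>v w. v \<le> w \<Longrightarrow> phi v \<le> phi w"
    and lip: "\<And>v w. v \<le> w \<Longrightarrow> phi w \<le> phi v + (w - v)"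
  shows "\<exists>vb vr. vb \<le> min (b + r) uv2 \<and> min (b + r) uv2 \<le> vr \<and> vr \<le> uv2 \<and>
     (\<forall>v\<in>{lv2..<uv2}.
        (v \<le> vb \<longrightarrow> v - r \<le> b \<and> phi v \<le> b) \<and>
        (vb < v \<and> v < vr \<longrightarrow> b \<le> phi v \<and> v - r \<le> phi v) \<and>
        (vr \<le> v \<longrightarrow> b \<le> v - r \<and> phi v \<le> v - r))"
proof -
  define m where "m = min (b + r) uv2"
  define Sb where "Sb = {v. 0 \<le> v \<and> v \<le> m \<and> phi v \<le> b}"
  define T where "T = insert uv2 {v. m \<le> v \<and> v \<le> uv2 \<and> phi v \<le> v - r}"
  define vb where "vb = Sup Sb"
  define vr where "vr = Inf T"
  have m0: "0 \<le> m" using lv luv b0 r0 unfolding m_def by linarith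
  have Sb0: "0 \<in> Sb" using m0 p0 unfolding Sb_def by auto
  have Sbne: "Sb \<noteq> {}" using Sb0 by auto
  have Sbbdd: "bdd_above Sb" unfolding Sb_def bdd_above_def by auto
  have vbm: "vb \<le> m" unfolding vb_def by (rule cSup_least[OF Sbne]) (auto simp: Sb_def)
  have vbup: "\<And>v. v \<in> Sb \<Longrightarrow> v \<le> vb" unfolding vb_def using Sbbdd by (simp add: cSup_upper)
  have vb0: "0 \<le> vb" using vbup[OF Sb0] .
  have phivb: "phi vb \<le> b"
  proof (rule ccontr)
    assume "\<not> phi vb \<le> b"
    then have e: "vb - (phi vb - b) < vb" by simp
    then obtain s where s: "s \<in> Sb" "vb - (phi vb - b) < s"
      using less_cSupD[OF Sbne, of "vb - (phi vb - b)"] unfolding vb_def by auto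
    have "s \<le> vb" using vbup[OF s(1)] .
    then have "phi vb \<le> phi s + (vb - s)" by (rule lip)
    moreover have "phi s \<le> b" using s(1) unfolding Sb_def by auto
    ultimately show False using s(2) by linarith
  qed
  have Tne: "T \<noteq> {}" unfolding T_def by auto
  have Tbdd: "bdd_below T" unfolding T_def bdd_below_def using luv m0
    by (intro exI[of _ m]) (auto simp: m_def)
  have mvr: "m \<le> vr" unfolding vr_def by (rule cInf_greatest[OF Tne]) (auto simp: T_def m_def)
  have vrlow: "\<And>v. v \<in> T \<Longrightarrow> vr \<le> v" unfolding vr_def using Tbdd by (simp add: cInf_lower)
  have vru: "vr \<le> uv2" using vrlow[of uv2] by (auto simp: T_def)
  have phivr: "phi vr \<le> vr - r" if lt: "vr < uv2"
  proof (rule ccontr)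
    assume "\<not> phi vr \<le> vr - r"
    define e where "e = min (phi vr - vr + r) (uv2 - vr)"
    have ep: "0 < e" unfolding e_def using lt \<open>\<not> phi vr \<le> vr - r\<close> by auto
    then obtain t where t: "t \<in> T" "t < vr + e"
      using cInf_lessD[OF Tne, of "vr + e"] unfolding vr_def by auto
    have "t \<noteq> uv2" using t(2) unfolding e_def by auto
    then have tS: "phi t \<le> t - r" using t(1) unfolding T_def by auto
    have "vr \<le> t" using vrlow[OF t(1)] .
    then have "phi vr \<le> phi t" by (rule mono)
    moreover have "t - r < phi vr" using t(2) unfolding e_def by auto
    ultimately show False using tS by linarith
  qed
  have main: "\<forall>v\<in>{lv2..<uv2}.
        (v \<le> vb \<longrightarrow> v - r \<le> b \<and> phi v \<le> b) \<and>
        (vb < v \<and> v < vr \<longrightarrow> b \<le> phi v \<and> v - r \<le> phi v) \<and>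
        (vr \<le> v \<longrightarrow> b \<le> v - r \<and> phi v \<le> v - r)"
  proof
    fix v assume v: "v \<in> {lv2..<uv2}"
    have v0: "0 \<le> v" "v < uv2" using v lv by auto
    have c1: "v \<le> vb \<longrightarrow> v - r \<le> b \<and> phi v \<le> b"
    proof
      assume "v \<le> vb"
      then have "phi v \<le> phi vb" by (rule mono)
      then show "v - r \<le> b \<and> phi v \<le> b" using \<open>v \<le> vb\<close> vbm phivb unfolding m_def by linarith
    qed
    have c3: "vr \<le> v \<longrightarrow> b \<le> v - r \<and> phi v \<le> v - r"
    proof
      assume a: "vr \<le> v"
      then have lt: "vr < uv2" using v0 by linarith
      have "phi v \<le> phi vr + (v - vr)" using a by (rule lip)
      then show "b \<le> v - r \<and> phi v \<le> v - r" using phivr[OF lt] a mvr v0 unfolding m_def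
        by (auto simp: min_def split: if_splits)
    qed
    have c2: "vb < v \<and> v < vr \<longrightarrow> b \<le> phi v \<and> v - r \<le> phi v"
    proof
      assume a: "vb < v \<and> v < vr"
      have nSb: "v \<notin> Sb" using a vbup by force
      have nT: "m \<le> v \<Longrightarrow> v - r < phi v"
      proof (rule ccontr)
        assume "m \<le> v" "\<not> v - r < phi v"
        then have "v \<in> T" using v0 unfolding T_def by auto
        then show False using vrlow a by force
      qed
      show "b \<le> phi v \<and> v - r \<le> phi v"
      proof (cases "v \<le> m")
        case True
        then have pb: "b < phi v" using nSb v0 unfolding Sb_def by auto
        show ?thesis
        proof (cases "m \<le> v")
          case True then show ?thesis using nT pb by auto
        next
          case False then have "v < b + r" unfolding m_def using v0 by auto
          then show ?thesis using pb by auto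
        qed
      next
        case False
        then have "b + r < v" unfolding m_def using v0 by auto
        then show ?thesis using nT False by auto
      qed
    qed
    show "(v \<le> vb \<longrightarrow> v - r \<le> b \<and> phi v \<le> b) \<and>
        (vb < v \<and> v < vr \<longrightarrow> b \<le> phi v \<and> v - r \<le> phi v) \<and>
        (vr \<le> v \<longrightarrow> b \<le> v - r \<and> phi v \<le> v - r)" using c1 c2 c3 by blast
  qed
  show ?thesis using vbm mvr vru main unfolding m_def by blast
qed

theorem lemma1:
  fixes lv1 uv1 lv2 uv2 b r :: real and M :: "real measure"
  assumes "0 \<le> lv1" and "lv1 < uv1" and "0 \<le> lv2" and "lv2 < uv2"
    and "0 \<le> b" and "0 \<le> r"
    and "prob_space M" and "sets M = sets borel"
    and "AE v1 in M. v1 \<in> {lv1..uv1}"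
  shows "\<exists>vb vr. vb \<le> min (b + r) uv2 \<and> min (b + r) uv2 \<le> vr \<and> vr \<le> uv2 \<and>
           best_response_on M b r {lv2..<uv2} (threshold_strategy vb vr)"
proof -
  interpret P: prob_space M by fact
  define phi where "phi v = exp_payoff2 M b r Reject v" for v
  have phi_eq: "phi v = (LINT x|M. max (v - x) 0)" for v
    unfolding phi_def exp_payoff2_def payoff2_def by simp
  have meas: "(\<lambda>x. max (v - x) 0) \<in> borel_measurable M" for v :: real
    unfolding measurable_cong_sets[OF assms(8) refl] by measurable
  have intg: "integrable M (\<lambda>x. max (v - x) 0)" for v :: real
  proof (rule P.integrable_const_bound[where B="\<bar>v\<bar> + uv1"])
    show "AE x in M. norm (max (v - x) 0) \<le> \<bar>v\<bar> + uv1"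
      using assms(9) by eventually_elim (use assms(1) in auto)
  qed (rule meas)
  have p0: "phi 0 \<le> b"
  proof -
    have "AE x in M. max (0 - x) 0 = (0::real)" using assms(9) by eventually_elim (use assms(1) in auto)
    then have "phi 0 = 0" unfolding phi_eq by (rule integral_eq_zero_AE)
    then show ?thesis using assms(5) by simp
  qed
  have mono: "phi v \<le> phi w" if "v \<le> w" for v w
    unfolding phi_eq by (rule integral_mono[OF intg intg]) (use that in auto)
  have lip: "phi w \<le> phi v + (w - v)" if "v \<le> w" for v w
  proof -
    have "phi w \<le> (LINT x|M. max (v - x) 0 + (w - v))"
      unfolding phi_eq by (rule integral_mono[OF intg]) (use intg that in auto)
    also have "\<dots> = phi v + (w - v)" unfolding phi_eq using intg by (simp add: P.prob_space)
    finally show ?thesis .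
  qed
  have eB: "exp_payoff2 M b r AcceptBribe v = b" for v
    unfolding exp_payoff2_def payoff2_def by (simp add: P.prob_space)
  have eA: "exp_payoff2 M b r AcceptRequest v = v - r" for v
    unfolding exp_payoff2_def payoff2_def by (simp add: P.prob_space)
  obtain vb vr where th: "vb \<le> min (b + r) uv2" "min (b + r) uv2 \<le> vr" "vr \<le> uv2" and
    H: "\<forall>v\<in>{lv2..<uv2}.
        (v \<le> vb \<longrightarrow> v - r \<le> b \<and> phi v \<le> b) \<and>
        (vb < v \<and> v < vr \<longrightarrow> b \<le> phi v \<and> v - r \<le> phi v) \<and>
        (vr \<le> v \<longrightarrow> b \<le> v - r \<and> phi v \<le> v - r)"
    using abstract_thresholds[of phi b lv2 uv2 r, OF p0 assms(3) assms(4) assms(5) assms(6) mono lip]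
    by blast
  have "best_response_on M b r {lv2..<uv2} (threshold_strategy vb vr)"
    unfolding best_response_on_def
  proof (intro ballI allI)
    fix v a assume v: "v \<in> {lv2..<uv2}"
    have ER: "exp_payoff2 M b r Reject v = phi v" by (simp add: phi_def)
    show "exp_payoff2 M b r a v \<le> exp_payoff2 M b r (threshold_strategy vb vr v) v"
      using H v by (cases a) (auto simp: threshold_strategy_def eB eA ER)
  qed
  then show ?thesis using th by blast
qed

end
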